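(* Let $q$ be a prime, let $c\in\mathbb{F}_q$, let $a_1,a_2,a_3\in\mathbb{F}_q\setminus\{0\}$, and let $\gamma_1,\gamma_2,\gamma_3$ be permutations of $\mathbb{F}_q$. If $\gamma_1(x_1)+\gamma_2(x_2)+\gamma_3(x_3)=c$ for all $x_1,x_2,x_3\in\mathbb{F}_q$ satisfying $a_1x_1+a_2x_2+a_3x_3=0$, then each $\gamma_i$ ($i=1,2,3$) is an affine transformation of $\mathbb{F}_q$, i.e. of the form $x\mapsto ux+w$ with $u,w\in\mathbb{F}_q$. *)

theory Defs
  imports "HOL-Computational_Algebra.Primes" "HOL-Library.Cardinality"
begin

(* F_q is modelled as an arbitrary finite field type 'a whose cardinality is a prime q
   (any such field is the prime field F_q). *)

definition affine_map :: "('a::field \<Rightarrow> 'a) \<Rightarrow> bool" where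
  "affine_map g \<longleftrightarrow> (\<exists>u w. \<forall>x. g x = u * x + w)"

end

theory Submission
  imports Defs "HOL-Number_Theory.Residues"
begin

lemma all_of_nat:
  assumes "prime CARD('a::{field,finite})"
  shows "\<exists>n. (x::'a) = of_nat n"
proof -
  have pos: "CHAR('a) > 0" by (simp add: finite_imp_CHAR_pos)
  have "CHAR('a) \<noteq> 1" proof
    assume "CHAR('a) = 1"
    hence "(of_nat 1::'a) = 0" by (metis of_nat_CHAR)
    thus False by simp
  qed
  moreover have "CHAR('a) dvd CARD('a)" by (rule CHAR_dvd_CARD)
  ultimately have eq: "CHAR('a) = CARD('a)" using assms prime_nat_iff by blast
  define H where "H = (of_nat ` {..<CHAR('a)} :: 'a set)"
  have "card H = card {..<CHAR('a)}"
    unfolding H_def by (intro card_image inj_onI) (auto simp: of_nat_eq_iff_cong_CHAR cong_def)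
  hence "card H = card (UNIV::'a set)" using eq by simp
  hence "H = UNIV" by (simp add: card_subset_eq)
  thus ?thesis unfolding H_def by blast
qed

lemma additive_linear:
  assumes "prime CARD('a::{field,finite})"
    and add: "\<And>s t. F (s + t) = F s + (F t :: 'a)"
  shows "F x = x * F 1"
proof -
  have "F (of_nat n) = of_nat n * F 1" for n
  proof (induction n)
    case 0
    have "F 0 + F 0 = F 0 + 0" using add[of 0 0] by simp
    then show ?case by (metis add_left_cancel of_nat_0 mult_zero_left)
  next
    case (Suc n)
    then show ?case using add[of "of_nat n" 1] by (simp add: algebra_simps)
  qed
  thus ?thesis using all_of_nat[OF assms(1), of x] by auto
qed

lemma key:
  assumes "prime CARD('a::{field,finite})"
    and h: "\<And>s t. g1 s + g2 t + f (s + t) = (c::'a)"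
  shows "affine_map f \<and> affine_map g1 \<and> affine_map g2"
proof -
  define F where "F s = f s - f 0" for s
  have f1: "f s = c - g2 0 - g1 s" for s using h[of s 0] by (simp add: algebra_simps)
  have f2: "f t = c - g1 0 - g2 t" for t using h[of 0 t] by (simp add: algebra_simps)
  have "F (s + t) = F s + F t" for s t
  proof -
    have A: "f (s + t) = c - g1 s - g2 t" using h[of s t] by (simp add: algebra_simps)
    have B: "f s = c - g2 0 - g1 s" by (rule f1)
    have C: "f t = c - g1 0 - g2 t" by (rule f2)
    have D: "f 0 = c - g1 0 - g2 0" by (rule f2)
    show ?thesis by (simp only: F_def A B C D) (simp add: algebra_simps)
  qed
  hence lin: "F x = x * F 1" for x using additive_linear[OF assms(1)] by blast
  have af: "f x = F 1 * x + f 0" for x using lin[of x] unfolding F_def by (simp add: algebra_simps)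
  show ?thesis unfolding affine_map_def
  proof (intro conjI)
    show "\<exists>u w. \<forall>x. f x = u * x + w" using af by blast
    have "g1 x = - F 1 * x + (c - g2 0 - f 0)" for x
      using f1[of x] af[of x] by (simp add: algebra_simps)
    thus "\<exists>u w. \<forall>x. g1 x = u * x + w" by blast
    have "g2 x = - F 1 * x + (c - g1 0 - f 0)" for x
      using f2[of x] af[of x] by (simp add: algebra_simps)
    thus "\<exists>u w. \<forall>x. g2 x = u * x + w" by blast
  qed
qed

lemma affine_scale:
  assumes "affine_map g"
  shows "affine_map (\<lambda>x. g (k * x))"
  using assms unfolding affine_map_def by (metis mult.assoc)

theorem lemma4:
  fixes c a1 a2 a3 :: "'a::{field,finite}"
    and \<gamma>1 \<gamma>2 \<gamma>3 :: "'a \<Rightarrow> 'a"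
  assumes "prime CARD('a)"
    and "a1 \<noteq> 0" and "a2 \<noteq> 0" and "a3 \<noteq> 0"
    and "bij \<gamma>1" and "bij \<gamma>2" and "bij \<gamma>3"
    and "\<forall>x1 x2 x3. a1 * x1 + a2 * x2 + a3 * x3 = 0 \<longrightarrow>
            \<gamma>1 x1 + \<gamma>2 x2 + \<gamma>3 x3 = c"
  shows "affine_map \<gamma>1 \<and> affine_map \<gamma>2 \<and> affine_map \<gamma>3"
proof -
  define g1 where "g1 s = \<gamma>1 (s / a1)" for s
  define g2 where "g2 s = \<gamma>2 (s / a2)" for s
  define f where "f s = \<gamma>3 (- s / a3)" for s
  have "g1 s + g2 t + f (s + t) = c" for s t
  proof -
    have "a1 * (s / a1) + a2 * (t / a2) + a3 * (- (s + t) / a3) = 0"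
      using assms(2-4) by (simp add: field_simps)
    thus ?thesis using assms(8) unfolding g1_def g2_def f_def by blast
  qed
  hence K: "affine_map f \<and> affine_map g1 \<and> affine_map g2" using key[OF assms(1)] by blast
  have e1: "\<gamma>1 = (\<lambda>x. g1 (a1 * x))" using assms(2) unfolding g1_def by auto
  have e2: "\<gamma>2 = (\<lambda>x. g2 (a2 * x))" using assms(3) unfolding g2_def by auto
  have e3: "\<gamma>3 = (\<lambda>x. f (- a3 * x))" using assms(4) unfolding f_def by auto
  show ?thesis using K affine_scale e1 e2 e3 by metis
qed

end
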